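(* Let $A$ and $B$ be nonempty closed subsets of a complete metric space $(X,\rho)$ such that the ordered pair $(A,B)$ has the $BUC$ property. Let $T:A\cup B\to A\cup B$ be a cyclic map and suppose there exists $k\in(0,1)$ such that $$\rho(Tx,Ty)\le k\max\{\rho(x,y),\rho(x,Tx),\rho(y,Ty)\}+(1-k)\,\mathrm{dist}(A,B)\quad\text{for all }x\in A,\ y\in B.$$ Then $T$ has a unique best proximity point $x$ in $A$, and for every $x_0\in A$ the sequence $\{T^{2n}x_0\}_{n=1}^\infty$ converges to $x$. Moreover $T$ has at least one best proximity point in $B$, and if the ordered pair $(B,A)$ also has the $BUC$ property, this best proximity point in $B$ is unique.
   Context: $\mathrm{dist}(A,B)=\inf\{\rho(a,b):a\in A,\ b\in B\}$. A map $T:A\cup B\to A\cup B$ is cyclic if $T(A)\subseteq B$ and $T(B)\subseteq A$. A point $x\in A$ (resp. $x\in B$) is a best proximity point of $T$ in $A$ (resp. in $B$) if $\rho(x,Tx)=\mathrm{dist}(A,B)$. The ordered pair $(A,B)$ has the bounded $UC$ property ($BUC$) if for all bounded sequences $\{x_n\},\{z_n\}\subset A$ and every sequence $\{y_n\}\subset B$ with $\lim_n\rho(x_n,y_n)=\lim_n\rho(z_n,y_n)=\mathrm{dist}(A,B)$ one has $\lim_n\rho(x_n,z_n)=0$; the property for $(B,A)$ is defined with the roles of $A$ and $B$ interchanged. *)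

theory Defs
  imports "HOL-Analysis.Analysis"
begin

text \<open>dist(A,B) is the library's setdist (for nonempty A, B it is the infimum of distances).\<close>

definition cyclic_map :: "('a \<Rightarrow> 'a) \<Rightarrow> 'a set \<Rightarrow> 'a set \<Rightarrow> bool" where
  "cyclic_map T A B \<longleftrightarrow> T ` A \<subseteq> B \<and> T ` B \<subseteq> A"

definition best_proximity_point :: "('a::metric_space \<Rightarrow> 'a) \<Rightarrow> 'a set \<Rightarrow> 'a set \<Rightarrow> 'a \<Rightarrow> bool" where
  "best_proximity_point T A B x \<longleftrightarrow> x \<in> A \<and> dist x (T x) = setdist A B"

definition BUC :: "'a::metric_space set \<Rightarrow> 'a set \<Rightarrow> bool" where
  "BUC A B \<longleftrightarrow> (\<forall>(x::nat \<Rightarrow> 'a) z y.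
      (\<forall>n. x n \<in> A \<and> z n \<in> A \<and> y n \<in> B) \<and> bounded (range x) \<and> bounded (range z) \<and>
      (\<lambda>n. dist (x n) (y n)) \<longlonglongrightarrow> setdist A B \<and>
      (\<lambda>n. dist (z n) (y n)) \<longlonglongrightarrow> setdist A B
      \<longrightarrow> (\<lambda>n. dist (x n) (z n)) \<longlonglongrightarrow> 0)"

end

theory Submission
  imports Defs
begin

lemma step_real:
  fixes k d D D' :: real
  assumes "0<k" "k<1" "d \<le> D" "d \<le> D'" "D' \<le> k*max D D' + (1-k)*d"
  shows "D' - d \<le> k*(D-d)"
proof (cases "D \<le> D'")
  case True
  then have "D' \<le> k*D' + (1-k)*d" using assms by (simp add: max_def)
  then have "(1-k)*D' \<le> (1-k)*d" by (simp add: algebra_simps)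
  then have "D' \<le> d" using assms by simp
  then show ?thesis using assms by (simp add: mult_nonneg_nonneg)
next
  case False
  then show ?thesis using assms by (simp add: max_def algebra_simps)
qed

lemma two_real:
  fixes k d a b :: real
  assumes "0<k" "k<1" "d \<le> a" "d \<le> b" "a \<le> k*max b d + (1-k)*d" "b \<le> k*max a d + (1-k)*d"
  shows "a = d"
proof -
  have 1: "a - d \<le> k*(b-d)" using assms by (simp add: max_def algebra_simps)
  have 2: "b - d \<le> k*(a-d)" using assms by (simp add: max_def algebra_simps)
  have "k*(b-d) \<le> k*(k*(a-d))" using 2 assms by simp
  then have "a - d \<le> (k*k)*(a-d)" using 1 by simp
  then have "(1 - k*k)*(a-d) \<le> 0" by (simp add: algebra_simps)
  moreover have kk: "k*k < k" using assms by simp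
  have "0 < 1 - k*k" using kk assms by linarith
  ultimately have "a - d \<le> 0" by (smt (verit) mult_le_0_iff)
  then show ?thesis using assms by simp
qed

lemma BUC_const:
  assumes "BUC X Y" "a \<in> X" "c \<in> X" "b \<in> Y" "dist a b = setdist X Y" "dist c b = setdist X Y"
  shows "a = c"
proof -
  have "(\<lambda>n. dist a c) \<longlonglongrightarrow> 0"
    using assms(1)[unfolded BUC_def, rule_format, of "\<lambda>n. a" "\<lambda>n. c" "\<lambda>n. b"] assms
    by simp
  then show ?thesis by (simp add: LIMSEQ_const_iff)
qed


lemma bound_real:
  fixes k d M P Da Db e :: real
  assumes k: "0<k" "k<1" and "0 \<le> d" "d \<le> Da" "d \<le> Db" "Da - d \<le> e" "Db - d \<le> e"
    "M \<le> Da + P + Db" "P \<le> k*max M (max Da Db) + (1-k)*d"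
  shows "M - d \<le> 3*(e+d)/(1-k)"
proof -
  have e0: "0 \<le> e" using assms by linarith
  have kk: "0 < 1 - k" using k by simp
  show ?thesis
  proof (cases "max Da Db \<le> M")
    case True
    then have "P \<le> k*M + (1-k)*d" using assms by (simp add: max_def)
    then have "(1-k)*(M-d) \<le> Da + Db" using assms by (simp add: algebra_simps)
    also have "\<dots> \<le> 3*(e+d)" using assms e0 by (smt (verit))
    finally show ?thesis using kk by (simp add: pos_le_divide_eq mult.commute)
  next
    case False
    then have "P \<le> k*max Da Db + (1-k)*d" using assms by (simp add: max_def)
    moreover have "k*max Da Db \<le> max Da Db" by (rule mult_left_le_one_le) (use k assms in \<open>auto simp: max_def\<close>)
    moreover have "max Da Db \<le> e + d" using assms by simp
    moreover have "(1-k)*d \<le> d" using k assms by (simp add: algebra_simps)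
    ultimately have "M - d \<le> 3*(e+d)" using assms by (smt (verit))
    also have "\<dots> \<le> 3*(e+d)/(1-k)"
    proof -
      have X: "0 \<le> 3*(e+d)" using e0 assms by simp
      have "3*(e+d)*(1-k) \<le> 3*(e+d)" by (rule mult_left_le) (use k X in auto)
      then show ?thesis using kk by (simp add: le_divide_eq)
    qed
    finally show ?thesis .
  qed
qed

locale bpctx =
  fixes A B :: "'a::complete_space set" and T :: "'a \<Rightarrow> 'a" and k :: real
  assumes cl: "closed A" "closed B"
    and buc: "BUC A B"
    and cyc: "cyclic_map T A B"
    and k: "0 < k" "k < 1"
    and contr: "\<And>x y. x \<in> A \<Longrightarrow> y \<in> B \<Longrightarrow>
           dist (T x) (T y) \<le> k * max (dist x y) (max (dist x (T x)) (dist y (T y)))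
                                + (1 - k) * setdist A B"
begin

lemma TA: "x \<in> A \<Longrightarrow> T x \<in> B" and TB: "x \<in> B \<Longrightarrow> T x \<in> A"
  using cyc by (auto simp: cyclic_map_def)

lemma dle: "a \<in> A \<Longrightarrow> b \<in> B \<Longrightarrow> setdist A B \<le> dist a b"
  by (rule setdist_le_dist)

lemma dle': "a \<in> A \<Longrightarrow> b \<in> B \<Longrightarrow> setdist A B \<le> dist b a"
  by (simp add: dist_commute setdist_le_dist)

lemma bppA:
  assumes x: "x \<in> A" and dx: "dist x (T x) = setdist A B"
  shows "dist (T x) (T (T x)) = setdist A B" "T (T x) = x"
proof -
  let ?d = "setdist A B"
  let ?s = "dist (T x) (T (T x))"
  have h: "?s \<le> k * max ?d (max ?d ?s) + (1-k)*?d"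
    using contr[OF x TA[OF x]] dx by simp
  have sd: "?d \<le> ?s" using dle'[OF TB[OF TA[OF x]] TA[OF x]] .
  have "?s - ?d \<le> k*(?d - ?d)"
    by (rule step_real[OF k order_refl sd]) (use h in simp)
  then show s: "?s = ?d" using sd by simp
  have "x = T (T x)"
    by (rule BUC_const[OF buc x TB[OF TA[OF x]] TA[OF x] dx]) (simp add: s dist_commute)
  then show "T (T x) = x" by simp
qed

lemma uniqA:
  assumes x: "x \<in> A" "dist x (T x) = setdist A B" and x': "x' \<in> A" "dist x' (T x') = setdist A B"
  shows "x = x'"
proof -
  let ?d = "setdist A B"
  have b: "dist x' (T x) \<le> k * max (dist x (T x')) ?d + (1-k)*?d"
    using contr[OF x(1) TA[OF x'(1)]] bppA[OF x'] x by (simp add: dist_commute)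
  have a: "dist x (T x') \<le> k * max (dist x' (T x)) ?d + (1-k)*?d"
    using contr[OF x'(1) TA[OF x(1)]] bppA[OF x] x' by (simp add: dist_commute)
  have "dist x (T x') = ?d"
    by (rule two_real[OF k dle[OF x(1) TA[OF x'(1)]] dle[OF x'(1) TA[OF x(1)]] a b])
  then show ?thesis
    by (rule BUC_const[OF buc x(1) x'(1) TA[OF x'(1)]]) (use x' in simp)
qed

lemma bppB:
  assumes y: "y \<in> B" and dy: "dist y (T y) = setdist A B"
  shows "dist (T y) (T (T y)) = setdist A B"
proof -
  let ?d = "setdist A B"
  let ?s = "dist (T y) (T (T y))"
  have h: "?s \<le> k * max ?d (max ?s ?d) + (1-k)*?d"
    using contr[OF TB[OF y] y] dy by (simp add: dist_commute)
  have sd: "?d \<le> ?s" using dle[OF TB[OF y] TA[OF TB[OF y]]] .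
  have "?s - ?d \<le> k*(?d - ?d)"
    by (rule step_real[OF k order_refl sd]) (use h in \<open>simp add: max.commute\<close>)
  then show s: "?s = ?d" using sd by simp
qed

lemma bppB2:
  assumes bu: "BUC B A" and y: "y \<in> B" and dy: "dist y (T y) = setdist A B"
  shows "T (T y) = y"
proof -
  have "y = T (T y)"
  by (rule BUC_const[OF bu y TA[OF TB[OF y]] TB[OF y]])
     (use bppB[OF y dy] dy in \<open>simp_all add: dist_commute setdist_sym\<close>)
  then show ?thesis by simp
qed

lemma uniqB:
  assumes bu: "BUC B A" and y: "y \<in> B" "dist y (T y) = setdist A B"
    and y': "y' \<in> B" "dist y' (T y') = setdist A B"
  shows "y = y'"
proof -
  let ?d = "setdist A B"
  have b: "dist y' (T y) \<le> k * max (dist y (T y')) ?d + (1-k)*?d"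
    using contr[OF TB[OF y'(1)] y(1)] bppB2[OF bu y'] bppB[OF y'] y by (simp add: dist_commute)
  have a: "dist y (T y') \<le> k * max (dist y' (T y)) ?d + (1-k)*?d"
    using contr[OF TB[OF y(1)] y'(1)] bppB2[OF bu y] bppB[OF y] y' by (simp add: dist_commute)
  have "dist y (T y') = ?d"
    by (rule two_real[OF k dle'[OF TB[OF y'(1)] y(1)] dle'[OF TB[OF y(1)] y'(1)] a b])
  then show ?thesis
    by (rule BUC_const[OF bu y(1) y'(1) TB[OF y'(1)], unfolded setdist_sym[of B A]]) (use y' in simp)
qed

lemma seq:
  assumes x0: "x0 \<in> A"
  shows "\<exists>l\<in>A. (\<lambda>n. (T^^(2*n)) x0) \<longlonglongrightarrow> l \<and> dist l (T l) = setdist A B"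
proof -
  define d where "d = setdist A B"
  define x where "x n = (T^^n) x0" for n
  have xS: "x (Suc n) = T (x n)" for n by (simp add: x_def)
  have mem: "x (2*n) \<in> A \<and> x (2*n+1) \<in> B" for n
  proof (induction n)
    case 0 then show ?case using x0 TA by (simp add: x_def)
  next
    case (Suc n)
    have "x (2*Suc n) = T (x (2*n+1))" using xS[of "2*n+1"] by simp
    moreover have "x (2*Suc n+1) = T (x (2*Suc n))" using xS[of "2*Suc n"] by simp
    ultimately show ?case using Suc TA TB by simp
  qed
  have memA: "x (2*n) \<in> A" and memB: "x (2*n+1) \<in> B" for n using mem by auto
  have d0: "0 \<le> d" by (simp add: d_def setdist_pos_le)
  have ev: "x n \<in> A \<and> x (Suc n) \<in> B" if "even n" for n
  proof -
    from that obtain m where "n = 2*m" by (auto elim: evenE)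
    then show ?thesis using memA[of m] memB[of m] by simp
  qed
  have od: "x n \<in> B \<and> x (Suc n) \<in> A" if "odd n" for n
  proof -
    from that obtain m where m: "n = 2*m+1" by (auto elim: oddE)
    then have "Suc n = 2*Suc m" by simp
    then show ?thesis using memA[of "Suc m"] memB[of m] m by simp
  qed
  define D where "D n = dist (x n) (x (Suc n))" for n
  have Dge: "d \<le> D n" for n
  proof (cases "even n")
    case True then show ?thesis using ev[OF True] dle unfolding D_def d_def by blast
  next
    case False then show ?thesis using od[OF False] dle' unfolding D_def d_def by blast
  qed
  have Dstep: "D (Suc n) - d \<le> k * (D n - d)" for n
  proof (cases "even n")
    case True
    have "D (Suc n) \<le> k * max (D n) (max (D n) (D (Suc n))) + (1-k)*d"
      using contr[of "x n" "x (Suc n)"] ev[OF True] unfolding D_def d_def xS by simp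
    then have "D (Suc n) \<le> k * max (D n) (D (Suc n)) + (1-k)*d" by simp
    then show ?thesis using step_real[OF k Dge Dge] by blast
  next
    case False
    have "D (Suc n) \<le> k * max (D n) (max (D (Suc n)) (D n)) + (1-k)*d"
      using contr[of "x (Suc n)" "x n"] od[OF False] unfolding D_def d_def xS
      by (simp add: dist_commute)
    then have "D (Suc n) \<le> k * max (D n) (D (Suc n)) + (1-k)*d" by (simp add: max.commute)
    then show ?thesis using step_real[OF k Dge Dge] by blast
  qed
  define e where "e = D 0 - d"
  have e0: "0 \<le> e" using Dge[of 0] by (simp add: e_def)
  have Dbound: "D n - d \<le> k^n * e" for n
  proof (induction n)
    case 0 then show ?case by (simp add: e_def)
  next
    case (Suc n)
    have "D (Suc n) - d \<le> k * (D n - d)" by (rule Dstep)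
    also have "\<dots> \<le> k * (k^n * e)" using Suc k by (simp add: mult_left_mono)
    finally show ?case by simp
  qed
  have kpow: "k^m \<le> k^j" if "j \<le> m" for m j
    using power_decreasing[OF that, of k] k by simp
  have Dle: "D n - d \<le> k^j * e" if "j \<le> n" for n j
    using Dbound[of n] kpow[OF that] e0 by (meson mult_right_mono order_trans)
  have De: "D n - d \<le> e" for n using Dle[of 0 n] by simp
  define E where "E a b = dist (x (2*a)) (x (2*b+1)) - d" for a b
  have Ege: "0 \<le> E a b" for a b using dle[OF memA memB] by (simp add: E_def d_def)
  have Erec: "E (Suc m) n \<le> k * max (E n m) (max (D (2*n) - d) (D (2*m+1) - d))" for m n
  proof -
    have x2: "x (2*Suc m) = T (x (2*m+1))" using xS[of "2*m+1"] by simp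
    have x1: "x (2*n+1) = T (x (2*n))" using xS[of "2*n"] by simp
    have D1: "D (2*n) = dist (x (2*n)) (T (x (2*n)))" by (simp add: D_def xS)
    have D2: "D (2*m+1) = dist (x (2*m+1)) (T (x (2*m+1)))" by (simp add: D_def xS)
    have "dist (x (2*Suc m)) (x (2*n+1)) \<le>
        k * max (E n m + d) (max (D (2*n)) (D (2*m+1))) + (1-k)*d"
      using contr[OF memA[of n] memB[of m]] unfolding x2 x1 D1 D2 E_def d_def
      by (simp add: dist_commute)
    moreover have "max (E n m + d) (max (D (2*n)) (D (2*m+1))) =
        max (E n m) (max (D (2*n) - d) (D (2*m+1) - d)) + d"
      by (simp add: max_def)
    ultimately show ?thesis unfolding E_def by (simp add: algebra_simps)
  qed
  define K where "K = 3*(e+d)/(1-k)"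
  have K0: "0 \<le> K" using k e0 d0 by (simp add: K_def)
  have Ebound: "E a b \<le> K" for a b
  proof -
    have x2: "x (2*b+2) = T (x (2*b+1))" using xS[of "2*b+1"] by simp
    have x1: "x (2*a+1) = T (x (2*a))" using xS[of "2*a"] by simp
    have tri: "dist (x (2*a)) (x (2*b+1)) \<le> D (2*a) + dist (x (2*a+1)) (x (2*b+2)) + D (2*b+1)"
    proof -
      have "dist (x (2*a)) (x (2*b+1)) \<le> dist (x (2*a)) (x (2*a+1)) + dist (x (2*a+1)) (x (2*b+1))"
        by (rule dist_triangle)
      moreover have "dist (x (2*a+1)) (x (2*b+1)) \<le> dist (x (2*a+1)) (x (2*b+2)) + dist (x (2*b+2)) (x (2*b+1))"
        by (rule dist_triangle)
      ultimately show ?thesis by (simp add: D_def dist_commute)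
    qed
    have P: "dist (x (2*a+1)) (x (2*b+2)) \<le>
        k * max (dist (x (2*a)) (x (2*b+1))) (max (D (2*a)) (D (2*b+1))) + (1-k)*d"
      using contr[OF memA[of a] memB[of b]] unfolding x2 x1 d_def by (simp add: D_def xS)
    show ?thesis
      using bound_real[OF k d0 Dge Dge De De tri P] by (simp add: E_def K_def)
  qed
  have Edecay: "j \<le> a \<Longrightarrow> j \<le> b \<Longrightarrow> E a b \<le> k^j * (K + e)" for j a b
  proof (induction j arbitrary: a b)
    case 0 then show ?case using Ebound[of a b] e0 by simp
  next
    case (Suc j)
    then obtain m where a: "a = Suc m" and m: "j \<le> m" by (cases a) auto
    have b: "j \<le> b" using Suc by simp
    have Ebm: "E b m \<le> k^j * (K + e)" using Suc.IH[OF b m] .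
    have kj: "k^j * e \<le> k^j * (K + e)"
      using k K0 by (intro mult_left_mono) auto
    moreover have "D (2*b) - d \<le> k^j * e" using Dle[of j "2*b"] b by simp
    moreover have "D (2*m+1) - d \<le> k^j * e" using Dle[of j "2*m+1"] m by simp
    ultimately have D12: "D (2*b) - d \<le> k^j * (K + e)" "D (2*m+1) - d \<le> k^j * (K + e)"
      by linarith+
    from Ebm D12 have "max (E b m) (max (D (2*b) - d) (D (2*m+1) - d)) \<le> k^j * (K + e)"
      by simp
    then have "k * max (E b m) (max (D (2*b) - d) (D (2*m+1) - d)) \<le> k * (k^j * (K + e))"
      using k by (intro mult_left_mono) auto
    then show ?case using Erec[of m b] a by simp
  qed
  define y where "y n = x (2*n)" for n
  have bnd: "bounded (range y)"
    unfolding bounded_def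
  proof (intro exI ballI)
    fix z assume "z \<in> range y"
    then obtain n where z: "z = y n" by auto
    show "dist (x 1) z \<le> K + d"
      using Ebound[of n 0] by (simp add: z y_def E_def dist_commute)
  qed
  have pow0: "(\<lambda>n. k^n) \<longlonglongrightarrow> 0" using k by (intro LIMSEQ_realpow_zero) auto
  have cau: "Cauchy y"
  proof (rule ccontr)
    assume "\<not> Cauchy y"
    then obtain r where r: "r > 0" and "\<forall>M. \<exists>m\<ge>M. \<exists>n\<ge>M. \<not> dist (y m) (y n) < r"
      unfolding Cauchy_def by blast
    then have ex: "\<forall>M. \<exists>m. m \<ge> M \<and> (\<exists>n\<ge>M. r \<le> dist (y m) (y n))"
      by (auto simp: not_less)
    obtain p where p: "\<forall>M. p M \<ge> M \<and> (\<exists>n\<ge>M. r \<le> dist (y (p M)) (y n))"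
      using choice[OF ex] by blast
    have ex2: "\<forall>M. \<exists>n. n \<ge> M \<and> r \<le> dist (y (p M)) (y n)" using p by blast
    obtain q where q: "\<forall>M. q M \<ge> M \<and> r \<le> dist (y (p M)) (y (q M))"
      using choice[OF ex2] by blast
    have pq: "\<And>M. p M \<ge> M \<and> q M \<ge> M \<and> r \<le> dist (y (p M)) (y (q M))"
      using p q by blast
    have lim: "(\<lambda>M. dist (y (f M)) (x (2*M+1))) \<longlonglongrightarrow> setdist A B"
      if f: "\<And>M. f M \<ge> M" for f
    proof (rule real_tendsto_sandwich[where f="\<lambda>M. d" and h="\<lambda>M. d + k^M * (K + e)"])
      show "\<forall>\<^sub>F M in sequentially. d \<le> dist (y (f M)) (x (2*M+1))"
        using Ege by (simp add: E_def y_def)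
      show "\<forall>\<^sub>F M in sequentially. dist (y (f M)) (x (2*M+1)) \<le> d + k^M * (K + e)"
        using Edecay[OF f order_refl] by (simp add: E_def y_def algebra_simps)
      show "(\<lambda>M. d) \<longlonglongrightarrow> setdist A B" by (simp add: d_def)
      have "(\<lambda>M. d + k^M * (K + e)) \<longlonglongrightarrow> d + 0 * (K + e)"
        by (intro tendsto_intros pow0)
      then show "(\<lambda>M. d + k^M * (K + e)) \<longlonglongrightarrow> setdist A B" by (simp add: d_def)
    qed
    have bp: "bounded (range (\<lambda>n. y (p n)))" by (rule bounded_subset[OF bnd]) auto
    have bq: "bounded (range (\<lambda>n. y (q n)))" by (rule bounded_subset[OF bnd]) auto
    have "(\<lambda>M. dist (y (p M)) (y (q M))) \<longlonglongrightarrow> 0"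
    proof (rule buc[unfolded BUC_def, rule_format])
      show "(\<forall>n. y (p n) \<in> A \<and> y (q n) \<in> A \<and> x (2*n+1) \<in> B) \<and>
        bounded (range (\<lambda>n. y (p n))) \<and> bounded (range (\<lambda>n. y (q n))) \<and>
        (\<lambda>n. dist (y (p n)) (x (2*n+1))) \<longlonglongrightarrow> setdist A B \<and>
        (\<lambda>n. dist (y (q n)) (x (2*n+1))) \<longlonglongrightarrow> setdist A B"
        using memA memB lim[of p] lim[of q] pq bp bq
        by (auto simp: y_def)
    qed
    then have "\<forall>\<^sub>F M in sequentially. dist (y (p M)) (y (q M)) < r"
      using r by (rule order_tendstoD(2))
    then obtain N where "\<And>M. M \<ge> N \<Longrightarrow> dist (y (p M)) (y (q M)) < r"
      by (auto simp: eventually_sequentially)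
    then show False using pq[of N] by force
  qed
  then obtain l where yl: "y \<longlonglongrightarrow> l" using Cauchy_convergent_iff convergent_def by blast
  have lA: "l \<in> A" using closed_sequentially[OF cl(1) _ yl] memA by (simp add: y_def)
  have Dlim: "D \<longlonglongrightarrow> d"
  proof (rule real_tendsto_sandwich[where f="\<lambda>M. d" and h="\<lambda>M. d + k^M * e"])
    show "\<forall>\<^sub>F M in sequentially. d \<le> D M" using Dge by simp
    show "\<forall>\<^sub>F M in sequentially. D M \<le> d + k^M * e" using Dbound by (simp add: algebra_simps)
    show "(\<lambda>M. d) \<longlonglongrightarrow> d" by simp
    have "(\<lambda>M. d + k^M * e) \<longlonglongrightarrow> d + 0 * e" by (intro tendsto_intros pow0)
    then show "(\<lambda>M. d + k^M * e) \<longlonglongrightarrow> d" by simp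
  qed
  have "(D \<circ> (\<lambda>n. 2*n+1)) \<longlonglongrightarrow> d"
    by (rule LIMSEQ_subseq_LIMSEQ[OF Dlim]) (simp add: strict_mono_def)
  then have Dodd: "(\<lambda>n. D (2*n+1)) \<longlonglongrightarrow> d" by (simp add: o_def)
  define s where "s = dist l (T l)"
  have ineq: "dist (T l) (y (Suc n)) \<le> k * max (dist l (y (Suc n)) + D (2*n+1)) s + (1-k)*d" for n
  proof -
    have x2: "y (Suc n) = T (x (2*n+1))" using xS[of "2*n+1"] by (simp add: y_def)
    have h: "dist (T l) (y (Suc n)) \<le> k * max (dist l (x (2*n+1))) (max s (D (2*n+1))) + (1-k)*d"
      using contr[OF lA memB[of n]] unfolding x2 s_def d_def by (simp add: D_def xS)
    have t: "dist l (x (2*n+1)) \<le> dist l (y (Suc n)) + D (2*n+1)"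
      using dist_triangle[of l "x (2*n+1)" "y (Suc n)"] x2
      by (simp add: D_def xS dist_commute)
    have "max (dist l (x (2*n+1))) (max s (D (2*n+1))) \<le> max (dist l (y (Suc n)) + D (2*n+1)) s"
    proof (intro max.boundedI)
      have pos: "D (2*n+1) \<le> dist l (y (Suc n)) + D (2*n+1)" by simp
      show "dist l (x (2*n+1)) \<le> max (dist l (y (Suc n)) + D (2*n+1)) s"
        using t by (rule order_trans) simp
      show "s \<le> max (dist l (y (Suc n)) + D (2*n+1)) s" by simp
      show "D (2*n+1) \<le> max (dist l (y (Suc n)) + D (2*n+1)) s"
        using pos by (rule order_trans) simp
    qed
    then have "k * max (dist l (x (2*n+1))) (max s (D (2*n+1))) \<le> k * max (dist l (y (Suc n)) + D (2*n+1)) s"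
      using k by (simp add: mult_left_mono)
    then show ?thesis using h by simp
  qed
  have ysl: "(\<lambda>n. y (Suc n)) \<longlonglongrightarrow> l" using yl by (rule LIMSEQ_Suc)
  have L: "(\<lambda>n. dist (T l) (y (Suc n))) \<longlonglongrightarrow> dist (T l) l"
    by (intro tendsto_intros ysl)
  have R: "(\<lambda>n. k * max (dist l (y (Suc n)) + D (2*n+1)) s + (1-k)*d) \<longlonglongrightarrow>
      k * max (dist l l + d) s + (1-k)*d"
    by (intro tendsto_intros ysl Dodd)
  have "dist (T l) l \<le> k * max (dist l l + d) s + (1-k)*d"
    by (rule LIMSEQ_le[OF L R]) (use ineq in auto)
  then have "s \<le> k * max d s + (1-k)*d" by (simp add: s_def dist_commute)
  moreover have sd: "d \<le> s" using dle[OF lA TA[OF lA]] by (simp add: s_def d_def)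
  ultimately have "s - d \<le> k * (d - d)" using step_real[OF k order_refl] by blast
  then have "s = d" using sd by simp
  moreover have "(\<lambda>n. (T^^(2*n)) x0) = y" by (simp add: y_def x_def fun_eq_iff)
  ultimately show ?thesis using lA yl by (auto simp: s_def d_def)
qed

end

theorem theorem33:
  fixes A B :: "'a::complete_space set" and T :: "'a \<Rightarrow> 'a" and k :: real
  assumes "A \<noteq> {}" "B \<noteq> {}" "closed A" "closed B"
    and "BUC A B"
    and "cyclic_map T A B"
    and "0 < k" "k < 1"
    and "\<And>x y. x \<in> A \<Longrightarrow> y \<in> B \<Longrightarrow>
           dist (T x) (T y) \<le> k * max (dist x y) (max (dist x (T x)) (dist y (T y)))
                                + (1 - k) * setdist A B"
  shows "(\<exists>x. best_proximity_point T A B x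
              \<and> (\<forall>x'. best_proximity_point T A B x' \<longrightarrow> x' = x)
              \<and> (\<forall>x0\<in>A. (\<lambda>n. (T ^^ (2 * n)) x0) \<longlonglongrightarrow> x))
         \<and> (\<exists>y. best_proximity_point T B A y)
         \<and> (BUC B A \<longrightarrow> (\<exists>!y. best_proximity_point T B A y))"
proof -
  interpret bpctx A B T k
    by (rule bpctx.intro) (use assms in auto)
  obtain a0 where a0: "a0 \<in> A" using assms(1) by auto
  from seq[OF a0] obtain l where l: "l \<in> A" "dist l (T l) = setdist A B" by blast
  have bpl: "best_proximity_point T A B l" using l by (simp add: best_proximity_point_def)
  have un: "\<forall>x'. best_proximity_point T A B x' \<longrightarrow> x' = l"
    using uniqA l by (auto simp: best_proximity_point_def)
  have conv: "\<forall>x0\<in>A. (\<lambda>n. (T ^^ (2 * n)) x0) \<longlonglongrightarrow> l"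
  proof
    fix x0 assume "x0 \<in> A"
    from seq[OF this] obtain l' where l': "l' \<in> A" "(\<lambda>n. (T ^^ (2 * n)) x0) \<longlonglongrightarrow> l'"
      "dist l' (T l') = setdist A B" by blast
    have "l' = l" using uniqA[OF l'(1,3) l] .
    then show "(\<lambda>n. (T ^^ (2 * n)) x0) \<longlonglongrightarrow> l" using l'(2) by simp
  qed
  have B1: "best_proximity_point T B A (T l)"
    using TA[OF l(1)] bppA[OF l] l by (simp add: best_proximity_point_def dist_commute setdist_sym)
  have B2: "BUC B A \<longrightarrow> (\<exists>!y. best_proximity_point T B A y)"
  proof
    assume bu: "BUC B A"
    show "\<exists>!y. best_proximity_point T B A y"
      using B1 uniqB[OF bu] by (metis best_proximity_point_def setdist_sym)
  qed
  show ?thesis using bpl un conv B1 B2 by blast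
qed

end
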